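(* Let $\boldsymbol\beta\in\mathbb R^p$ have support $\mathcal A$ with $\boldsymbol z_{\mathcal A}=\mathbf 1$ (all nonzero entries positive), let $\lambda>0$, and let $\tilde{\mathbf Z}$ be any $p\times p$ diagonal matrix with diagonal entries in $\{-1,+1\}$; put $\tilde{\boldsymbol\beta}=\tilde{\mathbf Z}\boldsymbol\beta$. Then for every design $\mathbf X$, $\phi_\lambda(\mathbf X\mid\tilde{\boldsymbol\beta})=\phi_\lambda(\mathbf X\tilde{\mathbf Z}\mid\boldsymbol\beta)$. Moreover, if $\mathbf X^*$ maximizes $\phi_\lambda(\cdot\mid\boldsymbol\beta)$ over all designs, then $\mathbf X^*\tilde{\mathbf Z}$ maximizes $\phi_\lambda(\cdot\mid\tilde{\boldsymbol\beta})$ over all designs.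
   Context: A design is an $n\times p$ matrix $\mathbf X$ with entries in $\{-1,+1\}$. Let $\mathbf P_1=n^{-1}\mathbf 1\mathbf 1^T$, let $\mathbf V$ be the diagonal matrix whose diagonal entries are those of $n^{-1}\mathbf X^T(\mathbf I-\mathbf P_1)\mathbf X$, let $\mathbf F=(\mathbf I-\mathbf P_1)\mathbf X\mathbf V^{-1/2}$ and $\mathbf C=n^{-1}\mathbf F^T\mathbf F$. For $\boldsymbol\beta\in\mathbb R^p$, its support is $\mathcal A=\{j:\beta_j\neq0\}$ with $|\mathcal A|=k\ge1$, $\mathcal I$ is the complement, $\boldsymbol z=\mathrm{sign}(\boldsymbol\beta)$, $\mathbf Z_{\mathcal A}=\mathrm{Diag}(\boldsymbol z_{\mathcal A})$. Subscripts: $\mathbf F_{\mathcal T}$ = columns in $\mathcal T$; $\boldsymbol w_{\mathcal T}$ = subvector; $\mathbf M_{\mathcal U\mathcal T}$ = rows $\mathcal U$, columns $\mathcal T$; $\mathbf M_{\mathcal T}=\mathbf M_{\mathcal T\mathcal T}$. Designs considered are those with $\mathbf C_{\mathcal A}$ invertible and positive diagonal of $\mathbf V_{\mathcal A}$. Let $\mathbf P_{\mathcal A}=\mathbf F_{\mathcal A}(\mathbf F_{\mathcal A}^T\mathbf F_{\mathcal A})^{-1}\mathbf F_{\mathcal A}^T$, $\lambda_n=\lambda\sqrt n$, $\boldsymbol e\sim N(\mathbf 0,\mathbf I_n)$, $\boldsymbol u=-n^{-1/2}\mathbf Z_{\mathcal A}\mathbf C_{\mathcal A}^{-1}\mathbf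 F_{\mathcal A}^T\boldsymbol e+\lambda_n\mathbf Z_{\mathcal A}\mathbf C_{\mathcal A}^{-1}\boldsymbol z_{\mathcal A}$, $\boldsymbol v=n^{-1/2}\mathbf F_{\mathcal I}^T(\mathbf I-\mathbf P_{\mathcal A})\boldsymbol e+\lambda_n\mathbf C_{\mathcal I\mathcal A}\mathbf C_{\mathcal A}^{-1}\boldsymbol z_{\mathcal A}$, $S_\lambda=\{\boldsymbol u<\sqrt n\,\mathbf Z_{\mathcal A}\mathbf V_{\mathcal A}^{1/2}\boldsymbol\beta_{\mathcal A}\}$ and $I_\lambda=\{|\boldsymbol v|\le\lambda_n\mathbf 1\}$ (componentwise). The sign recovery criterion of design $\mathbf X$ under $\boldsymbol\beta$ is $\phi_\lambda(\mathbf X\mid\boldsymbol\beta)=P(S_\lambda\cap I_\lambda)$, with all quantities computed from $\mathbf X$ and $\boldsymbol\beta$. *)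

theory Defs
  imports "HOL-Probability.Probability" "Jordan_Normal_Form.DL_Submatrix"
          "Jordan_Normal_Form.Gauss_Jordan_Elimination"
begin

text \<open>Matrices/vectors are Jordan_Normal_Form matrices; n = dim_row X, p = dim_col X.
  Index subsets are taken in increasing order via pick.\<close>

definition is_design :: "nat \<Rightarrow> nat \<Rightarrow> real mat \<Rightarrow> bool" where
  "is_design n p X \<longleftrightarrow> X \<in> carrier_mat n p \<and> (\<forall>i<n. \<forall>j<p. X $$ (i,j) \<in> {-1, 1})"

definition supp :: "real vec \<Rightarrow> nat set" where
  "supp b = {j. j < dim_vec b \<and> b $ j \<noteq> 0}"

definition compl_supp :: "real vec \<Rightarrow> nat set" where
  "compl_supp b = {j. j < dim_vec b \<and> b $ j = 0}"

definition subvec :: "'a vec \<Rightarrow> nat set \<Rightarrow> 'a vec" where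
  "subvec v T = vec (card {i. i < dim_vec v \<and> i \<in> T}) (\<lambda>i. v $ pick T i)"

definition minv :: "real mat \<Rightarrow> real mat" where
  "minv M = the (mat_inverse M)"

definition P1 :: "nat \<Rightarrow> real mat" where
  "P1 n = (1 / real n) \<cdot>\<^sub>m mat n n (\<lambda>_. 1)"

definition Vmat :: "real mat \<Rightarrow> real mat" where
  "Vmat X = (let n = dim_row X; p = dim_col X;
     G = (1 / real n) \<cdot>\<^sub>m (X\<^sup>T * (1\<^sub>m n - P1 n) * X)
   in mat_diag p (\<lambda>j. G $$ (j,j)))"

text \<open>V^{-1/2}: diagonal with entries 1/sqrt(V_jj) (using 1/0 = 0 if V_jj = 0).\<close>
definition Fmat :: "real mat \<Rightarrow> real mat" where
  "Fmat X = (let n = dim_row X; p = dim_col X; V = Vmat X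
   in (1\<^sub>m n - P1 n) * X * mat_diag p (\<lambda>j. 1 / sqrt (V $$ (j,j))))"

definition Cmat :: "real mat \<Rightarrow> real mat" where
  "Cmat X = (1 / real (dim_row X)) \<cdot>\<^sub>m ((Fmat X)\<^sup>T * Fmat X)"

definition admissible :: "nat \<Rightarrow> nat \<Rightarrow> real vec \<Rightarrow> real mat \<Rightarrow> bool" where
  "admissible n p b X \<longleftrightarrow> is_design n p X \<and> dim_vec b = p \<and>
     invertible_mat (submatrix (Cmat X) (supp b) (supp b)) \<and>
     (\<forall>j \<in> supp b. Vmat X $$ (j,j) > 0)"

definition gauss :: "nat \<Rightarrow> (nat \<Rightarrow> real) measure" where
  "gauss n = PiM {..<n} (\<lambda>_. density lborel std_normal_density)"

definition u_vec :: "real \<Rightarrow> real mat \<Rightarrow> real vec \<Rightarrow> real vec \<Rightarrow> real vec" where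
  "u_vec lam X b e = (let n = dim_row X; A = supp b; F = Fmat X; C = Cmat X;
     FA = submatrix F UNIV A; CAi = minv (submatrix C A A);
     zA = subvec (map_vec sgn b) A; k = dim_vec zA; ZA = mat_diag k (\<lambda>i. zA $ i);
     lamn = lam * sqrt (real n)
   in (- (1 / sqrt (real n))) \<cdot>\<^sub>v ((ZA * CAi * FA\<^sup>T) *\<^sub>v e) + lamn \<cdot>\<^sub>v ((ZA * CAi) *\<^sub>v zA))"

definition v_vec :: "real \<Rightarrow> real mat \<Rightarrow> real vec \<Rightarrow> real vec \<Rightarrow> real vec" where
  "v_vec lam X b e = (let n = dim_row X; A = supp b; I = compl_supp b; F = Fmat X; C = Cmat X;
     FA = submatrix F UNIV A; FI = submatrix F UNIV I;
     PA = FA * minv (FA\<^sup>T * FA) * FA\<^sup>T;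
     CAi = minv (submatrix C A A); CIA = submatrix C I A;
     zA = subvec (map_vec sgn b) A; lamn = lam * sqrt (real n)
   in (1 / sqrt (real n)) \<cdot>\<^sub>v ((FI\<^sup>T * (1\<^sub>m n - PA)) *\<^sub>v e) + lamn \<cdot>\<^sub>v ((CIA * CAi) *\<^sub>v zA))"

definition S_event :: "real \<Rightarrow> real mat \<Rightarrow> real vec \<Rightarrow> real vec \<Rightarrow> bool" where
  "S_event lam X b e = (let n = dim_row X; A = supp b; V = Vmat X;
     zA = subvec (map_vec sgn b) A; k = dim_vec zA; ZA = mat_diag k (\<lambda>i. zA $ i);
     VAh = mat_diag k (\<lambda>i. sqrt (submatrix V A A $$ (i,i)));
     rhs = sqrt (real n) \<cdot>\<^sub>v ((ZA * VAh) *\<^sub>v subvec b A);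
     u = u_vec lam X b e
   in \<forall>i<k. u $ i < rhs $ i)"

definition I_event :: "real \<Rightarrow> real mat \<Rightarrow> real vec \<Rightarrow> real vec \<Rightarrow> bool" where
  "I_event lam X b e = (let v = v_vec lam X b e
   in \<forall>i<dim_vec v. \<bar>v $ i\<bar> \<le> lam * sqrt (real (dim_row X)))"

definition phi :: "real \<Rightarrow> real mat \<Rightarrow> real vec \<Rightarrow> real" where
  "phi lam X b = (let n = dim_row X in
     measure (gauss n) {e \<in> space (gauss n).
        S_event lam X b (vec n e) \<and> I_event lam X b (vec n e)})"

end

theory Submission
  imports Defs
begin

lemma pick_UNIV: "pick UNIV i = i"
proof (induction i)
  case 0 then show ?case by (simp add: Least_eq_0)
next
  case (Suc i) then show ?case by (auto intro!: Least_equality)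
qed

lemma sub_card: "A \<subseteq> {..<p} \<Longrightarrow> {j. j<p \<and> j\<in>A} = A" by auto

lemma pick_lt: "A \<subseteq> {..<p} \<Longrightarrow> i < card A \<Longrightarrow> pick A i < p"
  using pick_in_set_le by blast

lemma diag_conj: "M \<in> carrier_mat r c \<Longrightarrow>
  mat_diag r f * M * mat_diag c g = mat r c (\<lambda>(i,j). f i * M$$(i,j) * g j)"
  by (subst mat_diag_mult_left[of _ r c], simp, subst mat_diag_mult_right[of _ r c], auto)

lemma mult_diag_vec: "v \<in> carrier_vec k \<Longrightarrow> mat_diag k f *\<^sub>v v = vec k (\<lambda>i. f i * v$i)"
proof (rule eq_vecI, auto simp: scalar_prod_def mat_diag_def, goal_cases)
  case (1 i) thus ?case by (subst sum.remove[of _ i], auto)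
qed

lemma sub_dims: "M \<in> carrier_mat r c \<Longrightarrow> A \<subseteq> {..<r} \<Longrightarrow> B \<subseteq> {..<c} \<Longrightarrow>
   dim_row (submatrix M A B) = card A \<and> dim_col (submatrix M A B) = card B"
  unfolding dim_submatrix by (metis carrier_matD sub_card)

lemma sub_carrier: "M \<in> carrier_mat r c \<Longrightarrow> A \<subseteq> {..<r} \<Longrightarrow> B \<subseteq> {..<c} \<Longrightarrow>
   submatrix M A B \<in> carrier_mat (card A) (card B)"
  using sub_dims carrier_matI by metis

lemma subU_dims: "M \<in> carrier_mat r c \<Longrightarrow> B \<subseteq> {..<c} \<Longrightarrow>
   dim_row (submatrix M UNIV B) = r \<and> dim_col (submatrix M UNIV B) = card B"
proof -
  assume M: "M \<in> carrier_mat r c" and B: "B \<subseteq> {..<c}"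
  have "{i. i < r \<and> i \<in> UNIV} = {..<r}" by auto
  then show ?thesis unfolding dim_submatrix using carrier_matD[OF M] sub_card[OF B] by simp
qed

lemma subU_carrier: "M \<in> carrier_mat r c \<Longrightarrow> B \<subseteq> {..<c} \<Longrightarrow>
   submatrix M UNIV B \<in> carrier_mat r (card B)"
  using subU_dims carrier_matI by metis

lemma sub_index: "M \<in> carrier_mat r c \<Longrightarrow> A \<subseteq> {..<r} \<Longrightarrow> B \<subseteq> {..<c} \<Longrightarrow>
  i < card A \<Longrightarrow> j < card B \<Longrightarrow> submatrix M A B $$ (i,j) = M $$ (pick A i, pick B j)"
  by (rule submatrix_index) (metis carrier_matD sub_card)+

lemma subU_index: "M \<in> carrier_mat r c \<Longrightarrow> B \<subseteq> {..<c} \<Longrightarrow>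
  i < r \<Longrightarrow> j < card B \<Longrightarrow> submatrix M UNIV B $$ (i,j) = M $$ (i, pick B j)"
  using submatrix_index[of i M UNIV j B] subU_dims[of M r c B] unfolding dim_submatrix
  by (simp add: pick_UNIV)


lemma sub_diag_right: assumes M: "M \<in> carrier_mat r c" and B: "B \<subseteq> {..<c}"
  shows "submatrix (M * mat_diag c g) UNIV B = submatrix M UNIV B * mat_diag (card B) (\<lambda>i. g (pick B i))"
proof -
  have MD: "M * mat_diag c g \<in> carrier_mat r c" using M by simp
  have e1: "M * mat_diag c g = mat r c (\<lambda>(i,j). M$$(i,j) * g j)" by (rule mat_diag_mult_right[OF M])
  have e2: "submatrix M UNIV B * mat_diag (card B) (\<lambda>i. g (pick B i))
     = mat r (card B) (\<lambda>(i,j). submatrix M UNIV B $$ (i,j) * g (pick B j))"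
    by (rule mat_diag_mult_right[OF subU_carrier[OF M B]])
  have d1: "dim_row (submatrix (M * mat_diag c g) UNIV B) = r" "dim_col (submatrix (M * mat_diag c g) UNIV B) = card B"
    using subU_dims[OF MD B] by auto
  show ?thesis unfolding e2
  proof (rule eq_matI)
    fix i j assume ij: "i < dim_row (mat r (card B) (\<lambda>(i,j). submatrix M UNIV B $$ (i,j) * g (pick B j)))"
      "j < dim_col (mat r (card B) (\<lambda>(i,j). submatrix M UNIV B $$ (i,j) * g (pick B j)))"
    then have i: "i < r" and j: "j < card B" by auto
    have "submatrix (M * mat_diag c g) UNIV B $$ (i,j) = (M * mat_diag c g) $$ (i, pick B j)"
      by (rule subU_index[OF MD B i j])
    also have "\<dots> = M $$ (i, pick B j) * g (pick B j)" unfolding e1 using i pick_lt[OF B j] by simp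
    also have "\<dots> = submatrix M UNIV B $$ (i,j) * g (pick B j)" using subU_index[OF M B i j] by simp
    finally show "submatrix (M * mat_diag c g) UNIV B $$ (i,j) =
       mat r (card B) (\<lambda>(i,j). submatrix M UNIV B $$ (i,j) * g (pick B j)) $$ (i,j)" using i j by simp
  qed (use d1 in auto)
qed

lemma sub_diag_conj: assumes M: "M \<in> carrier_mat r c" and A: "A \<subseteq> {..<r}" and B: "B \<subseteq> {..<c}"
  shows "submatrix (mat_diag r f * M * mat_diag c g) A B =
   mat_diag (card A) (\<lambda>i. f (pick A i)) * submatrix M A B * mat_diag (card B) (\<lambda>i. g (pick B i))"
proof -
  have MD: "mat_diag r f * M * mat_diag c g \<in> carrier_mat r c"
    by (rule mult_carrier_mat[OF mult_carrier_mat[OF mat_diag_dim M] mat_diag_dim])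
  have e1: "mat_diag r f * M * mat_diag c g = mat r c (\<lambda>(i,j). f i * M$$(i,j) * g j)" by (rule diag_conj[OF M])
  have e2: "mat_diag (card A) (\<lambda>i. f (pick A i)) * submatrix M A B * mat_diag (card B) (\<lambda>i. g (pick B i))
     = mat (card A) (card B) (\<lambda>(i,j). f (pick A i) * submatrix M A B $$ (i,j) * g (pick B j))"
    by (rule diag_conj[OF sub_carrier[OF M A B]])
  have d1: "dim_row (submatrix (mat_diag r f * M * mat_diag c g) A B) = card A"
     "dim_col (submatrix (mat_diag r f * M * mat_diag c g) A B) = card B"
    using sub_dims[OF MD A B] by auto
  show ?thesis unfolding e2
  proof (rule eq_matI)
    fix i j assume ij: "i < dim_row (mat (card A) (card B) (\<lambda>(i,j). f (pick A i) * submatrix M A B $$ (i,j) * g (pick B j)))"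
      "j < dim_col (mat (card A) (card B) (\<lambda>(i,j). f (pick A i) * submatrix M A B $$ (i,j) * g (pick B j)))"
    then have i: "i < card A" and j: "j < card B" by auto
    have "submatrix (mat_diag r f * M * mat_diag c g) A B $$ (i,j) = (mat_diag r f * M * mat_diag c g) $$ (pick A i, pick B j)"
      by (rule sub_index[OF MD A B i j])
    also have "\<dots> = f (pick A i) * M $$ (pick A i, pick B j) * g (pick B j)" unfolding e1 using pick_lt[OF A i] pick_lt[OF B j] by simp
    also have "\<dots> = f (pick A i) * submatrix M A B $$ (i,j) * g (pick B j)" using sub_index[OF M A B i j] by simp
    finally show "submatrix (mat_diag r f * M * mat_diag c g) A B $$ (i,j) =
       mat (card A) (card B) (\<lambda>(i,j). f (pick A i) * submatrix M A B $$ (i,j) * g (pick B j)) $$ (i,j)" using i j by simp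
  qed (use d1 in auto)
qed

lemma sub_smult: assumes M: "M \<in> carrier_mat r c" and A: "A \<subseteq> {..<r}" and B: "B \<subseteq> {..<c}"
  shows "submatrix (a \<cdot>\<^sub>m M) A B = a \<cdot>\<^sub>m submatrix M A B"
proof -
  have aM: "a \<cdot>\<^sub>m M \<in> carrier_mat r c" using M by simp
  show ?thesis
    by (rule eq_matI) (use sub_dims[OF M A B] sub_dims[OF aM A B] sub_index[OF M A B] sub_index[OF aM A B]
      pick_lt[OF A] pick_lt[OF B] M in auto)
qed

lemma colU: assumes M: "M \<in> carrier_mat r c" and B: "B \<subseteq> {..<c}" and j: "j < card B"
  shows "col (submatrix M UNIV B) j = col M (pick B j)"
  by (rule eq_vecI) (use subU_dims[OF M B] subU_index[OF M B _ j] M pick_lt[OF B j] j in auto)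

lemma sub_gram: assumes F: "F \<in> carrier_mat n p" and A: "A \<subseteq> {..<p}"
  shows "submatrix (F\<^sup>T * F) A A = (submatrix F UNIV A)\<^sup>T * submatrix F UNIV A"
proof -
  have G: "F\<^sup>T * F \<in> carrier_mat p p" using F by simp
  have S: "submatrix F UNIV A \<in> carrier_mat n (card A)" by (rule subU_carrier[OF F A])
  show ?thesis
  proof (rule eq_matI)
    fix i j assume "i < dim_row ((submatrix F UNIV A)\<^sup>T * submatrix F UNIV A)"
      "j < dim_col ((submatrix F UNIV A)\<^sup>T * submatrix F UNIV A)"
    then have i: "i < card A" and j: "j < card A" using S by auto
    have "submatrix (F\<^sup>T * F) A A $$ (i,j) = (F\<^sup>T * F) $$ (pick A i, pick A j)"
      by (rule sub_index[OF G A A i j])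
    also have "\<dots> = col F (pick A i) \<bullet> col F (pick A j)" using F pick_lt[OF A i] pick_lt[OF A j] by simp
    also have "\<dots> = col (submatrix F UNIV A) i \<bullet> col (submatrix F UNIV A) j"
      using colU[OF F A i] colU[OF F A j] by simp
    also have "\<dots> = ((submatrix F UNIV A)\<^sup>T * submatrix F UNIV A) $$ (i,j)" using S i j by simp
    finally show "submatrix (F\<^sup>T * F) A A $$ (i,j) = ((submatrix F UNIV A)\<^sup>T * submatrix F UNIV A) $$ (i,j)" .
  qed (use sub_dims[OF G A A] S in auto)
qed


lemma mat_diag_cong: "(\<And>i. i<k \<Longrightarrow> f i = g i) \<Longrightarrow> mat_diag k f = mat_diag k g"
  unfolding mat_diag_def by (rule eq_matI) auto

lemma transpose_diag: "(mat_diag k f)\<^sup>T = mat_diag k f"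
  by (rule eq_matI) (auto simp: mat_diag_def)

lemma diag_dims[simp]: "dim_row (mat_diag k f) = k" "dim_col (mat_diag k f) = k"
  unfolding mat_diag_def by auto

lemma smult_smult_mat[simp]: "(a::real) \<cdot>\<^sub>m (b \<cdot>\<^sub>m M) = (a * b) \<cdot>\<^sub>m M"
  by (rule eq_matI) auto

lemma one_smult_mat'[simp]: "(1::real) \<cdot>\<^sub>m M = M"
  by (rule eq_matI) auto

lemma T_XD: fixes X :: "real mat" shows "X \<in> carrier_mat n p \<Longrightarrow> (X * mat_diag p d)\<^sup>T = mat_diag p d * X\<^sup>T"
  by (subst mat_diag_mult_left[of _ p n], simp, subst mat_diag_mult_right[of _ n p], assumption,
      rule eq_matI, auto simp: mult.commute)

lemma diag_sq_one: assumes "\<And>i. i<k \<Longrightarrow> f i * f i = 1"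
  shows "mat_diag k f * mat_diag k f = 1\<^sub>m k"
proof -
  have "mat_diag k (\<lambda>i. f i * f i) = mat_diag k (\<lambda>_. 1)" by (rule mat_diag_cong) (use assms in auto)
  then show ?thesis by simp
qed

lemma cancel_left: fixes E G Y :: "real mat" shows "E \<in> carrier_mat k k \<Longrightarrow> G \<in> carrier_mat k k \<Longrightarrow> G * E = 1\<^sub>m k \<Longrightarrow>
   Y \<in> carrier_mat k m \<Longrightarrow> G * (E * Y) = Y"
proof -
  assume E: "E \<in> carrier_mat k k" and G: "G \<in> carrier_mat k k" and GE: "G * E = 1\<^sub>m k" and Y: "Y \<in> carrier_mat k m"
  have "G * (E * Y) = (G * E) * Y" by (rule assoc_mult_mat[symmetric, OF G E Y])
  also have "\<dots> = Y" unfolding GE by (rule left_mult_one_mat[OF Y])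
  finally show ?thesis .
qed

lemma minv_props: assumes "M \<in> carrier_mat k k" "invertible_mat M"
  shows "minv M \<in> carrier_mat k k \<and> M * minv M = 1\<^sub>m k \<and> minv M * M = 1\<^sub>m k"
proof -
  obtain B where B0: "M * B = 1\<^sub>m (dim_row M)" "B * M = 1\<^sub>m (dim_row B)"
    using assms unfolding invertible_mat_def inverts_mat_def by auto
  have dM: "dim_row M = k" "dim_col M = k" using assms(1) by auto
  have "dim_col B = k" using B0(1) dM by (metis index_mult_mat(3) index_one_mat(3))
  moreover have "dim_row B = k" using B0(2) dM by (metis index_mult_mat(3) index_one_mat(3))
  ultimately have Bc: "B \<in> carrier_mat k k" by auto
  have B: "M * B = 1\<^sub>m k" "B * M = 1\<^sub>m k" using B0 dM Bc by auto
  have "M \<in> Units (ring_mat TYPE(real) k ())"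
    using B Bc assms(1) unfolding Units_def by (auto simp: ring_mat_simps)
  note U = this
  have "mat_inverse M \<noteq> None"
  proof
    assume "mat_inverse M = None"
    note X = mat_inverse(1)[OF assms(1) this]
    show False using X[of "()"] U by blast
  qed
  then obtain B' where "mat_inverse M = Some B'" by auto
  then show ?thesis using mat_inverse(2)[OF assms(1)] unfolding minv_def by auto
qed

lemma inv_two_sided: "M \<in> carrier_mat k k \<Longrightarrow> M * B = 1\<^sub>m k \<Longrightarrow> B * M = 1\<^sub>m k \<Longrightarrow> invertible_mat M"
  unfolding invertible_mat_def inverts_mat_def square_mat.simps
  by (metis carrier_matD index_mult_mat(2))

lemma minv_unique: fixes M B :: "real mat" assumes "M \<in> carrier_mat k k" "B \<in> carrier_mat k k" "M * B = 1\<^sub>m k" "B * M = 1\<^sub>m k"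
  shows "minv M = B"
proof -
  have inv: "invertible_mat M" using inv_two_sided assms by blast
  note P = minv_props[OF assms(1) inv]
  have mc: "minv M \<in> carrier_mat k k" using P by blast
  have "minv M = (B * M) * minv M" unfolding assms(4) using left_mult_one_mat[OF mc] by simp
  also have "\<dots> = B * (M * minv M)" by (rule assoc_mult_mat[OF assms(2) assms(1) mc])
  also have "\<dots> = B" using P assms by simp
  finally show ?thesis .
qed

lemma conj_inv: fixes M B E :: "real mat" assumes M: "M \<in> carrier_mat k k" and B: "B \<in> carrier_mat k k"
  and MB: "M * B = 1\<^sub>m k" and BM: "B * M = 1\<^sub>m k" and E: "E \<in> carrier_mat k k" and EE: "E * E = 1\<^sub>m k"
shows "(E * M * E) * (E * B * E) = 1\<^sub>m k \<and> (E * B * E) * (E * M * E) = 1\<^sub>m k"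
proof -
  have "(E * M * E) * (E * B * E) = E * (M * (E * (E * (B * E))))" using M B E by (simp add: assoc_mult_mat[of _ k k _ k _ k])
  also have "\<dots> = E * (M * (B * E))" using cancel_left[OF E E EE, of "B * E" k] M B E by simp
  also have "\<dots> = E * E" using cancel_left[OF B M MB, of E] E by simp
  finally have 1: "(E * M * E) * (E * B * E) = 1\<^sub>m k" using EE by simp
  have "(E * B * E) * (E * M * E) = E * (B * (E * (E * (M * E))))" using M B E by (simp add: assoc_mult_mat[of _ k k _ k _ k])
  also have "\<dots> = E * (B * (M * E))" using cancel_left[OF E E EE, of "M * E" k] M B E by simp
  also have "\<dots> = E * E" using cancel_left[OF M B BM, of E] E by simp
  finally show ?thesis using 1 EE by simp
qed

lemma minv_conj: fixes M E :: "real mat" assumes "M \<in> carrier_mat k k" "invertible_mat M" "E \<in> carrier_mat k k" "E * E = 1\<^sub>m k"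
  shows "minv (E * M * E) = E * minv M * E" "invertible_mat (E * M * E)"
proof -
  note P = minv_props[OF assms(1,2)]
  note C = conj_inv[OF assms(1) conjunct1[OF P] conjunct1[OF conjunct2[OF P]] conjunct2[OF conjunct2[OF P]] assms(3,4)]
  show "minv (E * M * E) = E * minv M * E"
    by (rule minv_unique) (use C P assms in auto)
  show "invertible_mat (E * M * E)"
    by (rule inv_two_sided[of _ k]) (use C P assms in auto)
qed



lemma smult_inv: assumes A: "A \<in> carrier_mat k k" and B: "B \<in> carrier_mat k k"
  and AB: "A * B = 1\<^sub>m k" and BA: "B * A = 1\<^sub>m k" and c: "(c::real) \<noteq> 0"
shows "(c \<cdot>\<^sub>m A) * ((1/c) \<cdot>\<^sub>m B) = 1\<^sub>m k \<and> ((1/c) \<cdot>\<^sub>m B) * (c \<cdot>\<^sub>m A) = 1\<^sub>m k"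
proof -
  have 1: "(c \<cdot>\<^sub>m A) * ((1/c) \<cdot>\<^sub>m B) = 1\<^sub>m k"
    using A B AB c by (simp add: mult_smult_assoc_mat[of _ k k _ k] mult_smult_distrib[of _ k k _ k])
  have "((1/c) \<cdot>\<^sub>m B) * (c \<cdot>\<^sub>m A) = 1\<^sub>m k"
    using A B BA c by (simp add: mult_smult_assoc_mat[of _ k k _ k] mult_smult_distrib[of _ k k _ k])
  then show ?thesis using 1 by simp
qed

lemma zero_not_inv: fixes M :: "real mat" assumes "k > 0" "M \<in> carrier_mat k k" "\<And>i j. i < k \<Longrightarrow> j < k \<Longrightarrow> M $$ (i,j) = 0"
  shows "\<not> invertible_mat M"
proof
  assume "invertible_mat M"
  note P = minv_props[OF assms(2) this]
  have "M = 0\<^sub>m k k" using assms by (intro eq_matI) auto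
  then have "M * minv M = 0\<^sub>m k k" using P left_mult_zero_mat[of "minv M" k k k] by simp
  then have "(1\<^sub>m k :: real mat) = 0\<^sub>m k k" using P by simp
  then have "(1\<^sub>m k :: real mat) $$ (0,0) = 0\<^sub>m k k $$ (0,0)" by simp
  then show False using assms(1) by simp
qed



context
  fixes d :: "nat \<Rightarrow> real" and p :: nat
  assumes dpm: "\<And>j. j < p \<Longrightarrow> d j = 1 \<or> d j = -1"
begin

lemma dd: "j < p \<Longrightarrow> d j * d j = 1" using dpm by fastforce

lemma DD: "mat_diag p d * mat_diag p d = 1\<^sub>m p" by (rule diag_sq_one) (rule dd)

lemma design_XD: "is_design n p X \<Longrightarrow> is_design n p (X * mat_diag p d)"
  unfolding is_design_def
  by (subst mat_diag_mult_right[of _ n p], simp, (auto)[1]) (use dpm in fastforce)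

lemma Dv: "dim_vec b = p \<Longrightarrow> mat_diag p d *\<^sub>v b = vec p (\<lambda>j. d j * b $ j)"
  by (rule mult_diag_vec) auto

lemma supp_Db: "dim_vec b = p \<Longrightarrow> supp (mat_diag p d *\<^sub>v b) = supp b"
  unfolding supp_def using Dv dpm by fastforce

lemma csupp_Db: "dim_vec b = p \<Longrightarrow> compl_supp (mat_diag p d *\<^sub>v b) = compl_supp b"
  unfolding compl_supp_def using Dv dpm by fastforce

lemma XDD: "X \<in> carrier_mat n p \<Longrightarrow> X * mat_diag p d * mat_diag p d = X"
  using DD by (simp add: assoc_mult_mat[of _ n p _ p _ p])

lemma P1_carrier: "1\<^sub>m n - P1 n \<in> carrier_mat n n"
  unfolding P1_def by (rule minus_carrier_mat) auto

lemma V_XD: assumes X: "X \<in> carrier_mat n p"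
  shows "Vmat (X * mat_diag p d) = Vmat X"
proof -
  let ?D = "mat_diag p d"
  let ?Q = "1\<^sub>m n - P1 n"
  have Q: "?Q \<in> carrier_mat n n" by (rule P1_carrier)
  have D: "?D \<in> carrier_mat p p" by simp
  have T: "(X * ?D)\<^sup>T = ?D * X\<^sup>T" using T_XD[OF X] .
  have K: "X\<^sup>T * ?Q * X \<in> carrier_mat p p" using X Q by simp
  have a1: "?Q * X * ?D = ?Q * (X * ?D)" by (rule assoc_mult_mat[OF Q X D])
  have e: "(X * ?D)\<^sup>T * ?Q * (X * ?D) = ?D * (X\<^sup>T * ?Q * X) * ?D"
    unfolding T using X Q D a1
    by (simp add: assoc_mult_mat[of _ p n _ n _ p] assoc_mult_mat[of _ p p _ n _ n]
       assoc_mult_mat[of _ p n _ n _ n] assoc_mult_mat[of _ p n _ p _ p] assoc_mult_mat[of _ n n _ n _ p]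
       assoc_mult_mat[of _ n p _ p _ p] assoc_mult_mat[of _ p p _ n _ p] assoc_mult_mat[of _ p p _ p _ p])
  have dims: "dim_row (X * ?D) = n" "dim_col (X * ?D) = p" "dim_row X = n" "dim_col X = p" using X by auto
  show ?thesis unfolding Vmat_def Let_def dims e
    by (rule mat_diag_cong) (use K dd in \<open>auto simp: diag_conj[OF K]\<close>)
qed

lemma F_carrier: assumes X: "X \<in> carrier_mat n p" shows "Fmat X \<in> carrier_mat n p"
proof -
  have dims: "dim_row X = n" "dim_col X = p" using X by auto
  show ?thesis unfolding Fmat_def Let_def dims
    by (rule mult_carrier_mat[of _ n p], rule mult_carrier_mat[of _ n n], rule P1_carrier, rule X, simp)
qed

lemma C_carrier: assumes X: "X \<in> carrier_mat n p" shows "Cmat X \<in> carrier_mat p p"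
proof -
  have F: "Fmat X \<in> carrier_mat n p" by (rule F_carrier[OF X])
  have FT: "(Fmat X)\<^sup>T \<in> carrier_mat p n" using F by simp
  show ?thesis unfolding Cmat_def by (rule smult_carrier_mat, rule mult_carrier_mat[OF FT F])
qed

lemma V_carrier: "X \<in> carrier_mat n p \<Longrightarrow> Vmat X \<in> carrier_mat p p"
  unfolding Vmat_def Let_def by auto

lemma F_XD: assumes X: "X \<in> carrier_mat n p"
  shows "Fmat (X * mat_diag p d) = Fmat X * mat_diag p d"
proof -
  let ?D = "mat_diag p d"
  let ?Q = "1\<^sub>m n - P1 n"
  let ?W = "mat_diag p (\<lambda>j. 1 / sqrt (Vmat X $$ (j, j)))"
  have Q: "?Q \<in> carrier_mat n n" by (rule P1_carrier)
  have c: "?D * ?W = ?W * ?D" by (simp add: mult.commute)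
  have dims: "dim_row (X * ?D) = n" "dim_col (X * ?D) = p" "dim_row X = n" "dim_col X = p" using X by auto
  have "?Q * (X * ?D) * ?W = ?Q * (X * (?D * ?W))" using X Q
    by (simp add: assoc_mult_mat[of _ n n _ p _ p] assoc_mult_mat[of _ n p _ p _ p])
  also have "\<dots> = ?Q * X * ?W * ?D" unfolding c using X Q
    by (simp add: assoc_mult_mat[of _ n n _ p _ p] assoc_mult_mat[of _ n p _ p _ p])
  finally show ?thesis unfolding Fmat_def Let_def V_XD[OF X] dims .
qed

lemma C_XD: assumes X: "X \<in> carrier_mat n p"
  shows "Cmat (X * mat_diag p d) = mat_diag p d * Cmat X * mat_diag p d"
proof -
  let ?D = "mat_diag p d"
  define F where "F = Fmat X"
  have F: "F \<in> carrier_mat n p" using F_carrier[OF X] F_def by simp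
  have D: "?D \<in> carrier_mat p p" by simp
  have T: "(F * ?D)\<^sup>T = ?D * F\<^sup>T" using T_XD[OF F] .
  have K: "F\<^sup>T * F \<in> carrier_mat p p" using F by simp
  have e: "(F * ?D)\<^sup>T * (F * ?D) = ?D * (F\<^sup>T * F) * ?D"
    unfolding T using F D
    by (simp add: assoc_mult_mat[of _ p n _ p _ p] assoc_mult_mat[of _ p p _ n _ p]
      assoc_mult_mat[of _ p p _ p _ p] assoc_mult_mat[of _ p n _ n _ p])
  have dims: "dim_row (X * ?D) = n" using X by auto
  have "Cmat (X * ?D) = (1 / real n) \<cdot>\<^sub>m (?D * (F\<^sup>T * F) * ?D)"
    unfolding Cmat_def F_XD[OF X] dims F_def[symmetric] e ..
  also have "\<dots> = ?D * ((1 / real n) \<cdot>\<^sub>m (F\<^sup>T * F)) * ?D"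
    using K mult_carrier_mat[OF D K] by (simp add: mult_smult_distrib[of _ p p _ p] mult_smult_assoc_mat[of _ p p _ p])
  also have "(1 / real n) \<cdot>\<^sub>m (F\<^sup>T * F) = Cmat X" unfolding Cmat_def F_def using X by simp
  finally show ?thesis .
qed


lemma events_eq:
  fixes X :: "real mat" and b w :: "real vec" and n :: nat and lam :: real
  assumes X: "X \<in> carrier_mat n p" and b: "dim_vec b = p"
    and pos: "\<forall>j<p. b $ j \<noteq> 0 \<longrightarrow> sgn (b $ j) = 1"
    and ne: "supp b \<noteq> {}"
    and inv: "invertible_mat (submatrix (Cmat X) (supp b) (supp b))"
    and w: "w \<in> carrier_vec n"
  shows "S_event lam X (mat_diag p d *\<^sub>v b) w = S_event lam (X * mat_diag p d) b w \<and>
         I_event lam X (mat_diag p d *\<^sub>v b) w = I_event lam (X * mat_diag p d) b w"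
proof -
  let ?D = "mat_diag p d"
  define b' where "b' = ?D *\<^sub>v b"
  define A where "A = supp b"
  define I where "I = compl_supp b"
  have sA: "supp b' = A" unfolding A_def b'_def using supp_Db[OF b] .
  have sI: "compl_supp b' = I" unfolding I_def b'_def using csupp_Db[OF b] .
  have Asub: "A \<subseteq> {..<p}" unfolding A_def supp_def using b by auto
  have Isub: "I \<subseteq> {..<p}" unfolding I_def compl_supp_def using b by auto
  have bb': "b' = vec p (\<lambda>j. d j * b $ j)" unfolding b'_def using Dv[OF b] .
  have db': "dim_vec b' = p" unfolding bb' by simp
  define k where "k = card A"
  define kI where "kI = card I"
  have finA: "finite A" using Asub finite_subset by blast
  have Ane: "A \<noteq> {}" using ne unfolding A_def .
  have kpos: "k > 0" unfolding k_def using finA Ane by (simp add: card_gt_0_iff)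
  have dimX: "dim_row X = n" "dim_row (X * ?D) = n" using X by auto
  define F where "F = Fmat X"
  define C where "C = Cmat X"
  define V where "V = Vmat X"
  have Fc: "F \<in> carrier_mat n p" unfolding F_def by (rule F_carrier[OF X])
  have Cc: "C \<in> carrier_mat p p" unfolding C_def by (rule C_carrier[OF X])
  have F': "Fmat (X * ?D) = F * ?D" unfolding F_def by (rule F_XD[OF X])
  have C': "Cmat (X * ?D) = ?D * C * ?D" unfolding C_def by (rule C_XD[OF X])
  have V': "Vmat (X * ?D) = V" unfolding V_def by (rule V_XD[OF X])
  define E where "E = mat_diag k (\<lambda>i. d (pick A i))"
  define EI where "EI = mat_diag kI (\<lambda>i. d (pick I i))"
  have Ec: "E \<in> carrier_mat k k" unfolding E_def by simp
  have EIc: "EI \<in> carrier_mat kI kI" unfolding EI_def by simp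
  have EE: "E * E = 1\<^sub>m k" unfolding E_def
    by (rule diag_sq_one, rule dd, rule pick_lt[OF Asub], simp add: k_def)
  define FA where "FA = submatrix F UNIV A"
  define FI where "FI = submatrix F UNIV I"
  define CA where "CA = submatrix C A A"
  define CIA where "CIA = submatrix C I A"
  have FAc: "FA \<in> carrier_mat n k" unfolding FA_def k_def by (rule subU_carrier[OF Fc Asub])
  have FIc: "FI \<in> carrier_mat n kI" unfolding FI_def kI_def by (rule subU_carrier[OF Fc Isub])
  have CAc: "CA \<in> carrier_mat k k" unfolding CA_def k_def by (rule sub_carrier[OF Cc Asub Asub])
  have CIAc: "CIA \<in> carrier_mat kI k" unfolding CIA_def k_def kI_def by (rule sub_carrier[OF Cc Isub Asub])
  have FA': "submatrix (F * ?D) UNIV A = FA * E" unfolding FA_def E_def k_def by (rule sub_diag_right[OF Fc Asub])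
  have FI': "submatrix (F * ?D) UNIV I = FI * EI" unfolding FI_def EI_def kI_def by (rule sub_diag_right[OF Fc Isub])
  have CA': "submatrix (?D * C * ?D) A A = E * CA * E" unfolding CA_def E_def k_def by (rule sub_diag_conj[OF Cc Asub Asub])
  have CIA': "submatrix (?D * C * ?D) I A = EI * CIA * E" unfolding CIA_def E_def EI_def k_def kI_def
    by (rule sub_diag_conj[OF Cc Isub Asub])
  have invCA: "invertible_mat CA" using inv unfolding CA_def C_def A_def .
  define CAi where "CAi = minv CA"
  note P = minv_props[OF CAc invCA, folded CAi_def]
  have CAic: "CAi \<in> carrier_mat k k" using P by blast
  have CAi': "minv (E * CA * E) = E * CAi * E" unfolding CAi_def by (rule minv_conj(1)[OF CAc invCA Ec EE])
  have npos: "n > 0"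
  proof (rule ccontr)
    assume "\<not> n > 0"
    then have n0: "n = 0" by simp
    have "\<not> invertible_mat CA"
    proof (rule zero_not_inv[OF kpos CAc])
      fix i j assume "i < k" "j < k"
      then have "CA $$ (i,j) = C $$ (pick A i, pick A j)" unfolding CA_def k_def
        by (intro sub_index[OF Cc Asub Asub]) auto
      also have "\<dots> = 0" unfolding C_def Cmat_def dimX n0 using \<open>i < k\<close> \<open>j < k\<close> pick_lt[OF Asub] Fc
        by (simp add: k_def F_def[symmetric])
      finally show "CA $$ (i,j) = 0" .
    qed
    then show False using invCA by simp
  qed
  define M where "M = FA\<^sup>T * FA"
  have Mc: "M \<in> carrier_mat k k" unfolding M_def using FAc by simp
  have GC: "F\<^sup>T * F \<in> carrier_mat p p" using Fc by simp
  have CA_M: "CA = (1 / real n) \<cdot>\<^sub>m M"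
    unfolding CA_def C_def Cmat_def dimX F_def[symmetric] sub_smult[OF GC Asub Asub] M_def FA_def sub_gram[OF Fc Asub] ..
  have M_CA: "M = real n \<cdot>\<^sub>m CA" unfolding CA_M using npos by simp
  have SI: "M * ((1 / real n) \<cdot>\<^sub>m CAi) = 1\<^sub>m k \<and> ((1 / real n) \<cdot>\<^sub>m CAi) * M = 1\<^sub>m k"
    unfolding M_CA by (rule smult_inv[OF CAc CAic]) (use P npos in auto)
  have invM: "invertible_mat M" by (rule inv_two_sided[OF Mc]) (use SI in auto)
  define Mi where "Mi = minv M"
  have Mic: "Mi \<in> carrier_mat k k" unfolding Mi_def using minv_props[OF Mc invM] by blast
  have Mi': "minv (E * M * E) = E * Mi * E" unfolding Mi_def by (rule minv_conj(1)[OF Mc invM Ec EE])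
  have TFA: "(FA * E)\<^sup>T = E * FA\<^sup>T" unfolding E_def by (rule T_XD[OF FAc])
  have TFI: "(FI * EI)\<^sup>T = EI * FI\<^sup>T" unfolding EI_def by (rule T_XD[OF FIc])
  have FATc: "FA\<^sup>T \<in> carrier_mat k n" using FAc by simp
  have FITc: "FI\<^sup>T \<in> carrier_mat kI n" using FIc by simp
  note AS = assoc_mult_mat[of _ n n _ n _ n] assoc_mult_mat[of _ n n _ n _ k] assoc_mult_mat[of _ n n _ n _ kI] assoc_mult_mat[of _ n n _ k _ n] assoc_mult_mat[of _ n n _ k _ k] assoc_mult_mat[of _ n n _ k _ kI] assoc_mult_mat[of _ n n _ kI _ n] assoc_mult_mat[of _ n n _ kI _ k] assoc_mult_mat[of _ n n _ kI _ kI] assoc_mult_mat[of _ n k _ n _ n] assoc_mult_mat[of _ n k _ n _ k] assoc_mult_mat[of _ n k _ n _ kI] assoc_mult_mat[of _ n k _ k _ n] assoc_mult_mat[of _ n k _ k _ k] assoc_mult_mat[of _ n k _ k _ kI] assoc_mult_mat[of _ n k _ kI _ n] assoc_mult_mat[of _ n k _ kI _ k] assoc_mult_mat[of _ n k _ kI _ kI] assoc_mult_mat[of _ n kI _ n _ n] assoc_mult_mat[of _ n kI _ n _ k] assoc_mult_mat[of _ n kI _ n _ kI] assoc_mult_mat[of _ n kI _ k _ n] assoc_mult_mat[of _ n kI _ k _ k] assoc_mult_mat[of _ n kI _ k _ kI] assoc_mult_mat[of _ n kI _ kI _ n] assoc_mult_mat[of _ n kI _ kI _ k] assoc_mult_mat[of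 _ n kI _ kI _ kI] assoc_mult_mat[of _ k n _ n _ n] assoc_mult_mat[of _ k n _ n _ k] assoc_mult_mat[of _ k n _ n _ kI] assoc_mult_mat[of _ k n _ k _ n] assoc_mult_mat[of _ k n _ k _ k] assoc_mult_mat[of _ k n _ k _ kI] assoc_mult_mat[of _ k n _ kI _ n] assoc_mult_mat[of _ k n _ kI _ k] assoc_mult_mat[of _ k n _ kI _ kI] assoc_mult_mat[of _ k k _ n _ n] assoc_mult_mat[of _ k k _ n _ k] assoc_mult_mat[of _ k k _ n _ kI] assoc_mult_mat[of _ k k _ k _ n] assoc_mult_mat[of _ k k _ k _ k] assoc_mult_mat[of _ k k _ k _ kI] assoc_mult_mat[of _ k k _ kI _ n] assoc_mult_mat[of _ k k _ kI _ k] assoc_mult_mat[of _ k k _ kI _ kI] assoc_mult_mat[of _ k kI _ n _ n] assoc_mult_mat[of _ k kI _ n _ k] assoc_mult_mat[of _ k kI _ n _ kI] assoc_mult_mat[of _ k kI _ k _ n] assoc_mult_mat[of _ k kI _ k _ k] assoc_mult_mat[of _ k kI _ k _ kI] assoc_mult_mat[of _ k kI _ kI _ n] assoc_mult_mat[of _ k kI _ kI _ k] assoc_mult_mat[of _ k kI _ kI _ kI] assoc_mult_mat[of _ kI n _ n _ n] assoc_mult_mat[of _ kI n _ n _ k] assoc_mult_mat[of _ kI n _ n _ kI] assoc_mult_mat[of _ kI n _ k _ n] assoc_mult_mat[of _ kI n _ k _ k] assoc_mult_mat[of _ kI n _ k _ kI] assoc_mult_mat[of _ kI n _ kI _ n]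 assoc_mult_mat[of _ kI n _ kI _ k] assoc_mult_mat[of _ kI n _ kI _ kI] assoc_mult_mat[of _ kI k _ n _ n] assoc_mult_mat[of _ kI k _ n _ k] assoc_mult_mat[of _ kI k _ n _ kI] assoc_mult_mat[of _ kI k _ k _ n] assoc_mult_mat[of _ kI k _ k _ k] assoc_mult_mat[of _ kI k _ k _ kI] assoc_mult_mat[of _ kI k _ kI _ n] assoc_mult_mat[of _ kI k _ kI _ k] assoc_mult_mat[of _ kI k _ kI _ kI] assoc_mult_mat[of _ kI kI _ n _ n] assoc_mult_mat[of _ kI kI _ n _ k] assoc_mult_mat[of _ kI kI _ n _ kI] assoc_mult_mat[of _ kI kI _ k _ n] assoc_mult_mat[of _ kI kI _ k _ k] assoc_mult_mat[of _ kI kI _ k _ kI] assoc_mult_mat[of _ kI kI _ kI _ n] assoc_mult_mat[of _ kI kI _ kI _ k] assoc_mult_mat[of _ kI kI _ kI _ kI]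
  note AV = assoc_mult_mat_vec[of _ n n _ n] assoc_mult_mat_vec[of _ n n _ k] assoc_mult_mat_vec[of _ n n _ kI] assoc_mult_mat_vec[of _ n k _ n] assoc_mult_mat_vec[of _ n k _ k] assoc_mult_mat_vec[of _ n k _ kI] assoc_mult_mat_vec[of _ n kI _ n] assoc_mult_mat_vec[of _ n kI _ k] assoc_mult_mat_vec[of _ n kI _ kI] assoc_mult_mat_vec[of _ k n _ n] assoc_mult_mat_vec[of _ k n _ k] assoc_mult_mat_vec[of _ k n _ kI] assoc_mult_mat_vec[of _ k k _ n] assoc_mult_mat_vec[of _ k k _ k] assoc_mult_mat_vec[of _ k k _ kI] assoc_mult_mat_vec[of _ k kI _ n] assoc_mult_mat_vec[of _ k kI _ k] assoc_mult_mat_vec[of _ k kI _ kI] assoc_mult_mat_vec[of _ kI n _ n] assoc_mult_mat_vec[of _ kI n _ k] assoc_mult_mat_vec[of _ kI n _ kI] assoc_mult_mat_vec[of _ kI k _ n] assoc_mult_mat_vec[of _ kI k _ k] assoc_mult_mat_vec[of _ kI k _ kI] assoc_mult_mat_vec[of _ kI kI _ n] assoc_mult_mat_vec[of _ kI kI _ k] assoc_mult_mat_vec[of _ kI kI _ kI]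
  have canc: "E * (E * Y) = Y" if "Y \<in> carrier_mat k n" for Y
    by (rule cancel_left[OF Ec Ec EE that])
  have M': "(FA * E)\<^sup>T * (FA * E) = E * M * E" unfolding TFA M_def
    using Ec FAc FATc by (simp add: AS)
  have PA': "FA * E * minv ((FA * E)\<^sup>T * (FA * E)) * (FA * E)\<^sup>T = FA * Mi * FA\<^sup>T"
  proof -
    have "FA * E * minv ((FA * E)\<^sup>T * (FA * E)) * (FA * E)\<^sup>T = FA * (E * (E * (Mi * (E * (E * FA\<^sup>T)))))"
      unfolding M' unfolding Mi' TFA using Ec FAc FATc Mic by (simp add: AS)
    also have "\<dots> = FA * (Mi * FA\<^sup>T)" using canc Mic FATc by simp
    also have "\<dots> = FA * Mi * FA\<^sup>T" using FAc Mic FATc by (simp add: AS)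
    finally show ?thesis .
  qed
  define dv where "dv = vec k (\<lambda>i. d (pick A i))"
  define one where "one = vec k (\<lambda>i. (1::real))"
  have pA: "pick A i \<in> A" if "i < k" for i using pick_in_set_le that k_def by blast
  have pAp: "pick A i < p" if "i < k" for i using pA[OF that] Asub by blast
  have cardA: "card {i. i < p \<and> i \<in> A} = k" unfolding k_def sub_card[OF Asub] ..
  have bpos: "b $ pick A i > 0" if "i < k" for i
  proof -
    have "b $ pick A i \<noteq> 0" using pA[OF that] unfolding A_def supp_def by auto
    then show ?thesis using pos pAp[OF that] by (metis sgn_1_pos)
  qed
  have zb': "subvec (map_vec sgn b') A = dv" unfolding subvec_def dv_def
    by (rule eq_vecI) (auto simp: db' cardA bb' pAp sgn_mult bpos dest: dpm[OF pAp])
  have zb: "subvec (map_vec sgn b) A = one" unfolding subvec_def one_def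
    by (rule eq_vecI) (auto simp: b cardA pAp bpos)
  have dvdim: "dim_vec dv = k" "dim_vec one = k" unfolding dv_def one_def by auto
  have dvc: "dv \<in> carrier_vec k" "one \<in> carrier_vec k" unfolding dv_def one_def by auto
  have ZE: "mat_diag k (\<lambda>i. dv $ i) = E" unfolding E_def dv_def by (rule mat_diag_cong) simp
  have Z1: "mat_diag k (\<lambda>i. one $ i) = 1\<^sub>m k" unfolding one_def
    by (subst mat_diag_cong[of k _ "\<lambda>_. 1"]) auto
  have Eone: "E *\<^sub>v one = dv" unfolding E_def dv_def one_def by (subst mult_diag_vec) auto
  have sb': "subvec b' A = vec k (\<lambda>i. d (pick A i) * b $ pick A i)" unfolding subvec_def
    by (rule eq_vecI) (auto simp: db' cardA bb' pAp)
  have sb: "subvec b A = vec k (\<lambda>i. b $ pick A i)" unfolding subvec_def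
    by (rule eq_vecI) (auto simp: b cardA pAp)
  define a1 where "a1 = - (1 / sqrt (real n))"
  define a2 where "a2 = 1 / sqrt (real n)"
  define c where "c = lam * sqrt (real n)"
  have uX: "u_vec lam X b' w = a1 \<cdot>\<^sub>v ((E * CAi * FA\<^sup>T) *\<^sub>v w) + c \<cdot>\<^sub>v ((E * CAi) *\<^sub>v dv)"
    unfolding u_vec_def Let_def
    by (simp only: sA zb' dvdim ZE dimX F_def[symmetric] C_def[symmetric] FA_def[symmetric]
        CA_def[symmetric] CAi_def[symmetric] a1_def[symmetric] c_def[symmetric])
  have uXD: "u_vec lam (X * ?D) b w = a1 \<cdot>\<^sub>v ((1\<^sub>m k * (E * CAi * E) * (FA * E)\<^sup>T) *\<^sub>v w)
      + c \<cdot>\<^sub>v ((1\<^sub>m k * (E * CAi * E)) *\<^sub>v one)"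
    unfolding u_vec_def Let_def A_def[symmetric]
    by (simp only: zb dvdim Z1 dimX F' C' FA' CA' CAi' a1_def[symmetric] c_def[symmetric])
  have m1: "1\<^sub>m k * (E * CAi * E) * (FA * E)\<^sup>T = E * CAi * FA\<^sup>T"
  proof -
    have "1\<^sub>m k * (E * CAi * E) * (FA * E)\<^sup>T = E * (CAi * (E * (E * FA\<^sup>T)))"
      unfolding TFA using Ec CAic FATc by (simp add: AS)
    also have "\<dots> = E * CAi * FA\<^sup>T" using canc FATc Ec CAic by (simp add: AS)
    finally show ?thesis .
  qed
  have m2: "(1\<^sub>m k * (E * CAi * E)) *\<^sub>v one = (E * CAi) *\<^sub>v dv"
    using Ec CAic dvc by (simp add: AS AV Eone[symmetric])
  have ueq: "u_vec lam X b' w = u_vec lam (X * ?D) b w" unfolding uX uXD m1 m2 ..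
  define VAh where "VAh = mat_diag k (\<lambda>i. sqrt (submatrix V A A $$ (i, i)))"
  have rX: "(E * VAh) *\<^sub>v subvec b' A = (1\<^sub>m k * VAh) *\<^sub>v subvec b A"
  proof -
    have sbc: "subvec b' A \<in> carrier_vec k" "subvec b A \<in> carrier_vec k" unfolding sb' sb by auto
    have VAhc: "VAh \<in> carrier_mat k k" unfolding VAh_def by simp
    have e1: "E * VAh = mat_diag k (\<lambda>i. d (pick A i) * sqrt (submatrix V A A $$ (i, i)))"
      unfolding E_def VAh_def by simp
    have e2: "1\<^sub>m k * VAh = VAh" using VAhc by simp
    have alg: "(x::real) * s * (x * y) = (x * x) * (s * y)" for x s y by (simp add: ac_simps)
    show ?thesis unfolding e1 e2 unfolding VAh_def
    proof (subst (1 2) mult_diag_vec)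
      show "vec k (\<lambda>i. d (pick A i) * sqrt (submatrix V A A $$ (i, i)) * subvec b' A $ i) =
            vec k (\<lambda>i. sqrt (submatrix V A A $$ (i, i)) * subvec b A $ i)"
      proof (rule eq_vecI)
        fix i assume "i < dim_vec (vec k (\<lambda>i. sqrt (submatrix V A A $$ (i, i)) * subvec b A $ i))"
        then have i: "i < k" by simp
        show "vec k (\<lambda>i. d (pick A i) * sqrt (submatrix V A A $$ (i, i)) * subvec b' A $ i) $ i =
            vec k (\<lambda>i. sqrt (submatrix V A A $$ (i, i)) * subvec b A $ i) $ i"
          using i unfolding sb' sb by (simp add: alg dd[OF pAp[OF i]])
      qed simp
    qed (use sbc in auto)
  qed
  have S: "S_event lam X b' w = S_event lam (X * ?D) b w"
    unfolding S_event_def Let_def A_def[symmetric]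
    by (simp only: sA zb zb' dvdim ZE Z1 dimX V' V_def[symmetric] VAh_def[symmetric] ueq rX)
  have PA: "FA * minv (FA\<^sup>T * FA) * FA\<^sup>T = FA * Mi * FA\<^sup>T" unfolding M_def[symmetric] Mi_def ..
  define Q where "Q = 1\<^sub>m n - FA * Mi * FA\<^sup>T"
  have Qc: "Q \<in> carrier_mat n n" unfolding Q_def using FAc Mic by (intro minus_carrier_mat) (simp add: AS)
  have vX: "v_vec lam X b' w = a2 \<cdot>\<^sub>v ((FI\<^sup>T * Q) *\<^sub>v w) + c \<cdot>\<^sub>v ((CIA * CAi) *\<^sub>v dv)"
    unfolding v_vec_def Let_def
    by (simp only: sA sI zb' dimX F_def[symmetric] C_def[symmetric] FA_def[symmetric] FI_def[symmetric]
        CA_def[symmetric] CIA_def[symmetric] CAi_def[symmetric] a2_def[symmetric] c_def[symmetric] PA Q_def[symmetric])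
  have vXD: "v_vec lam (X * ?D) b w = a2 \<cdot>\<^sub>v ((EI * FI\<^sup>T * Q) *\<^sub>v w) + c \<cdot>\<^sub>v ((EI * CIA * E * (E * CAi * E)) *\<^sub>v one)"
    unfolding v_vec_def Let_def A_def[symmetric] I_def[symmetric]
    by (simp only: zb dimX F' C' FA' FI' CA' CIA' CAi' PA' TFI a2_def[symmetric] c_def[symmetric] Q_def[symmetric])
  define x where "x = (FI\<^sup>T * Q) *\<^sub>v w"
  define y where "y = (CIA * CAi) *\<^sub>v dv"
  have xc: "x \<in> carrier_vec kI" unfolding x_def using FITc Qc w by simp
  have yc: "y \<in> carrier_vec kI" unfolding y_def using CIAc CAic dvc by simp
  have v1: "(EI * FI\<^sup>T * Q) *\<^sub>v w = EI *\<^sub>v x" unfolding x_def using EIc FITc Qc w by (simp add: AS AV)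
  have v2: "(EI * CIA * E * (E * CAi * E)) *\<^sub>v one = EI *\<^sub>v y"
  proof -
    have EEz: "E *\<^sub>v (E *\<^sub>v z) = z" if "z \<in> carrier_vec k" for z
    proof -
      have "E *\<^sub>v (E *\<^sub>v z) = (E * E) *\<^sub>v z" by (rule assoc_mult_mat_vec[symmetric, OF Ec Ec that])
      then show ?thesis using EE that by simp
    qed
    have "(EI * CIA * E * (E * CAi * E)) *\<^sub>v one = EI *\<^sub>v (CIA *\<^sub>v (E *\<^sub>v (E *\<^sub>v (CAi *\<^sub>v (E *\<^sub>v one)))))"
      using EIc CIAc Ec CAic dvc by (simp add: AS AV)
    also have "EI *\<^sub>v (CIA *\<^sub>v (E *\<^sub>v (E *\<^sub>v (CAi *\<^sub>v (E *\<^sub>v one))))) = EI *\<^sub>v (CIA *\<^sub>v (CAi *\<^sub>v dv))"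
      using CAic dvc EEz[of "CAi *\<^sub>v dv"] by (simp add: Eone)
    also have "\<dots> = EI *\<^sub>v y" unfolding y_def using CIAc CAic dvc by (simp add: AV)
    finally show ?thesis .
  qed
  have vXe: "v_vec lam X b' w = a2 \<cdot>\<^sub>v x + c \<cdot>\<^sub>v y" unfolding vX x_def y_def ..
  have vXDe: "v_vec lam (X * ?D) b w = vec kI (\<lambda>i. d (pick I i) * (a2 \<cdot>\<^sub>v x + c \<cdot>\<^sub>v y) $ i)"
    unfolding vXD v1 v2 unfolding EI_def using xc yc
    by (simp add: mult_diag_vec, intro eq_vecI, auto simp: algebra_simps)
  have pIp: "pick I i < p" if "i < kI" for i using pick_lt[OF Isub] that kI_def by blast
  have absd: "\<bar>d (pick I i)\<bar> = 1" if "i < kI" for i using dpm[OF pIp[OF that]] by auto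
  have Iev: "I_event lam X b' w = I_event lam (X * ?D) b w"
    unfolding I_event_def Let_def vXe vXDe dimX using xc yc
    by (auto simp: abs_mult absd)
  show ?thesis using S Iev unfolding b'_def by blast
qed


lemma inv_transfer: assumes X: "X \<in> carrier_mat n p" and A: "A \<subseteq> {..<p}"
  and inv: "invertible_mat (submatrix (Cmat X) A A)"
  shows "invertible_mat (submatrix (Cmat (X * mat_diag p d)) A A)"
proof -
  have Cc: "Cmat X \<in> carrier_mat p p" by (rule C_carrier[OF X])
  have E: "mat_diag (card A) (\<lambda>i. d (pick A i)) * mat_diag (card A) (\<lambda>i. d (pick A i)) = 1\<^sub>m (card A)"
    by (rule diag_sq_one, rule dd, rule pick_lt[OF A]) simp
  show ?thesis unfolding C_XD[OF X] sub_diag_conj[OF Cc A A]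
    by (rule minv_conj(2)[OF sub_carrier[OF Cc A A] inv _ E]) simp
qed

lemma adm_transfer1: assumes b: "dim_vec b = p" and adm: "admissible n p (mat_diag p d *\<^sub>v b) X"
  shows "admissible n p b (X * mat_diag p d)"
proof -
  have des: "is_design n p X" using adm unfolding admissible_def by blast
  have X: "X \<in> carrier_mat n p" using des unfolding is_design_def by blast
  have A: "supp b \<subseteq> {..<p}" unfolding supp_def using b by auto
  have inv: "invertible_mat (submatrix (Cmat X) (supp b) (supp b))"
    using adm unfolding admissible_def supp_Db[OF b] by blast
  have V: "\<forall>j\<in>supp b. Vmat X $$ (j,j) > 0" using adm unfolding admissible_def supp_Db[OF b] by blast
  show ?thesis unfolding admissible_def V_XD[OF X]
    using design_XD[OF des] b inv_transfer[OF X A inv] V by blast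
qed

lemma adm_transfer2: assumes b: "dim_vec b = p" and adm: "admissible n p b X"
  shows "admissible n p (mat_diag p d *\<^sub>v b) (X * mat_diag p d)"
proof -
  have des: "is_design n p X" using adm unfolding admissible_def by blast
  have X: "X \<in> carrier_mat n p" using des unfolding is_design_def by blast
  have A: "supp b \<subseteq> {..<p}" unfolding supp_def using b by auto
  have inv: "invertible_mat (submatrix (Cmat X) (supp b) (supp b))"
    using adm unfolding admissible_def by blast
  have V: "\<forall>j\<in>supp b. Vmat X $$ (j,j) > 0" using adm unfolding admissible_def by blast
  have db: "dim_vec (mat_diag p d *\<^sub>v b) = p" using b by simp
  show ?thesis unfolding admissible_def V_XD[OF X] supp_Db[OF b]
    using design_XD[OF des] db inv_transfer[OF X A inv] V by blast
qed

lemma phi_eq: fixes b :: "real vec" assumes b: "dim_vec b = p"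
    and pos: "\<forall>j<p. b $ j \<noteq> 0 \<longrightarrow> sgn (b $ j) = 1"
    and ne: "supp b \<noteq> {}"
    and adm: "admissible n p (mat_diag p d *\<^sub>v b) X"
  shows "phi lam X (mat_diag p d *\<^sub>v b) = phi lam (X * mat_diag p d) b"
proof -
  have des: "is_design n p X" using adm unfolding admissible_def by blast
  have X: "X \<in> carrier_mat n p" using des unfolding is_design_def by blast
  have inv: "invertible_mat (submatrix (Cmat X) (supp b) (supp b))"
    using adm unfolding admissible_def supp_Db[OF b] by blast
  have dims: "dim_row X = n" "dim_row (X * mat_diag p d) = n" using X by auto
  have "{e \<in> space (gauss n). S_event lam X (mat_diag p d *\<^sub>v b) (vec n e) \<and> I_event lam X (mat_diag p d *\<^sub>v b) (vec n e)}
      = {e \<in> space (gauss n). S_event lam (X * mat_diag p d) b (vec n e) \<and> I_event lam (X * mat_diag p d) b (vec n e)}"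
  proof (rule Collect_cong)
    fix e
    have ev: "S_event lam X (mat_diag p d *\<^sub>v b) (vec n e) = S_event lam (X * mat_diag p d) b (vec n e) \<and>
         I_event lam X (mat_diag p d *\<^sub>v b) (vec n e) = I_event lam (X * mat_diag p d) b (vec n e)"
      by (rule events_eq[OF X b pos ne inv]) simp
    show "(e \<in> space (gauss n) \<and> S_event lam X (mat_diag p d *\<^sub>v b) (vec n e) \<and> I_event lam X (mat_diag p d *\<^sub>v b) (vec n e)) =
      (e \<in> space (gauss n) \<and> S_event lam (X * mat_diag p d) b (vec n e) \<and> I_event lam (X * mat_diag p d) b (vec n e))"
      using ev by simp
  qed
  then show ?thesis unfolding phi_def Let_def dims by (rule arg_cong)
qed

end


theorem theorem1:
  fixes n p :: nat and b :: "real vec" and Zt :: "real mat" and lam :: real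
  assumes "dim_vec b = p"
    and "supp b \<noteq> {}"
    and "\<forall>j<p. b $ j \<noteq> 0 \<longrightarrow> sgn (b $ j) = 1"
    and "lam > 0"
    and "Zt \<in> carrier_mat p p"
    and "\<forall>i<p. \<forall>j<p. i \<noteq> j \<longrightarrow> Zt $$ (i,j) = 0"
    and "\<forall>i<p. Zt $$ (i,i) \<in> {-1, 1}"
  shows "(\<forall>X. admissible n p (Zt *\<^sub>v b) X \<longrightarrow>
            phi lam X (Zt *\<^sub>v b) = phi lam (X * Zt) b)
       \<and> (\<forall>Xs. admissible n p b Xs \<and> (\<forall>X. admissible n p b X \<longrightarrow> phi lam X b \<le> phi lam Xs b)
            \<longrightarrow> admissible n p (Zt *\<^sub>v b) (Xs * Zt) \<and>
                (\<forall>X. admissible n p (Zt *\<^sub>v b) X \<longrightarrow>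
                   phi lam X (Zt *\<^sub>v b) \<le> phi lam (Xs * Zt) (Zt *\<^sub>v b)))"
proof -
  define d where "d = (\<lambda>j. Zt $$ (j,j))"
  have dpm: "d j = 1 \<or> d j = -1" if j: "j < p" for j
  proof -
    have "Zt $$ (j,j) \<in> {-1, 1}" using assms(7) j by blast
    then show ?thesis unfolding d_def by auto
  qed
  have Zd: "Zt = mat_diag p d"
  proof (rule eq_matI)
    fix i j assume "i < dim_row (mat_diag p d)" "j < dim_col (mat_diag p d)"
    then have i: "i < p" and j: "j < p" by auto
    show "Zt $$ (i,j) = mat_diag p d $$ (i,j)"
    proof (cases "i = j")
      case True then show ?thesis using i unfolding mat_diag_def d_def by simp
    next
      case False
      have "Zt $$ (i,j) = 0" using assms(6) i j False by blast
      then show ?thesis using i j False unfolding mat_diag_def by simp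
    qed
  qed (use assms(5) in auto)
  note b = assms(1) and ne = assms(2) and pos = assms(3)
  have P1: "phi lam X (mat_diag p d *\<^sub>v b) = phi lam (X * mat_diag p d) b"
    if "admissible n p (mat_diag p d *\<^sub>v b) X" for X
    by (rule phi_eq[OF dpm b pos ne that])
  show ?thesis unfolding Zd
  proof (intro conjI allI impI)
    fix X assume "admissible n p (mat_diag p d *\<^sub>v b) X"
    then show "phi lam X (mat_diag p d *\<^sub>v b) = phi lam (X * mat_diag p d) b" by (rule P1)
  next
    fix Xs assume H: "admissible n p b Xs \<and> (\<forall>X. admissible n p b X \<longrightarrow> phi lam X b \<le> phi lam Xs b)"
    then show A2: "admissible n p (mat_diag p d *\<^sub>v b) (Xs * mat_diag p d)"
      using adm_transfer2[OF dpm b] H by simp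
    fix X assume AX: "admissible n p (mat_diag p d *\<^sub>v b) X"
    have "is_design n p Xs" using H unfolding admissible_def by blast
    then have Xs: "Xs \<in> carrier_mat n p" unfolding is_design_def by blast
    have "phi lam X (mat_diag p d *\<^sub>v b) = phi lam (X * mat_diag p d) b" by (rule P1[OF AX])
    also have "\<dots> \<le> phi lam Xs b" using conjunct2[OF H] adm_transfer1[OF dpm b AX] by simp
    also have "\<dots> = phi lam (Xs * mat_diag p d * mat_diag p d) b" using XDD[OF dpm Xs] by simp
    also have "\<dots> = phi lam (Xs * mat_diag p d) (mat_diag p d *\<^sub>v b)" using P1[OF A2] by simp
    finally show "phi lam X (mat_diag p d *\<^sub>v b) \<le> phi lam (Xs * mat_diag p d) (mat_diag p d *\<^sub>v b)" .
  qed
qed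

end
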